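(* Let $L$ be a construction of an ASC-hypergraph $H$, let $Y\in L$ and $Z=\bigcup H\setminus Y$. Then $L_Y$ and ${}_Z L$ are the unique constructions $K$ of $H_Y$ and $J$ of ${}_Z H$ such that $K\ast J=L$.
   Context: A hypergraph is a finite set $H$ of nonempty subsets of some finite set; its carrier is $\bigcup H$. For a family $F$ and set $Y$, $F_Y=\{X\in F\mid X\subseteq Y\}$, and ${}_Z F=\{X\cap Z\mid X\in F,\ X\cap Z\neq\emptyset\}$. For $X\subseteq\bigcup H$, $X\cup_H Y=X\cup Y$ if $X\cup Y\in H$, and $X\cup_H Y=X$ otherwise. For constructions $K$ of $H_Y$ and $J$ of ${}_Z H$ the continuation is $K\ast J=K\cup\{X\cup_H Y\mid X\in J\}$. A hypergraph partition of $H$ is a partition $\{H_1,\dots,H_n\}$ ($n\ge0$) of the set $H$ with $\{\bigcup H_1,\dots,\bigcup H_n\}$ a partition of $\bigcup H$; $H$ is connected if it has exactly one hypergraph partition; the finest hypergraph partition is the unique one whose blocks are connected. $H$ is atomic if $\{x\}\in H$ for all $x\in\bigcup H$; saturated if $X_1,X_2\in H$ with $X_1\cap X_2\neq\emptyset$ imply $X_1\cup X_2\in H$. An ASC-hypergraph is one that is atomic, saturated and connected. Constructions of an atomic $H$, by induction on $|\bigcup H|$: (0) $\emptyset$ is the only construction of $\emptyset$; (1) if $|\bigcup H|\ge1$, $H$ connected, $x\in\bigcup H$, $K$ a construction of $H_{\bigcup H\setminus\{x\}}$, then $K\cup\{\bigcup H\}$ is a construction of $H$; (2) if $H$ is not connected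 with finest hypergraph partition $\{H_1,\dots,H_n\}$, $n\ge2$, and $K_i$ is a construction of $H_i$, then $K_1\cup\dots\cup K_n$ is a construction of $H$. *)

theory Defs
  imports "HOL-Library.Disjoint_Sets"
begin

definition hypergraph :: "'a set set \<Rightarrow> bool" where
  "hypergraph H \<longleftrightarrow> finite H \<and> {} \<notin> H \<and> (\<forall>X\<in>H. finite X)"

definition restr :: "'a set set \<Rightarrow> 'a set \<Rightarrow> 'a set set" where
  "restr F Y = {X \<in> F. X \<subseteq> Y}"

definition trace :: "'a set \<Rightarrow> 'a set set \<Rightarrow> 'a set set" where
  "trace Z F = {X \<inter> Z | X. X \<in> F \<and> X \<inter> Z \<noteq> {}}"

definition hunion :: "'a set set \<Rightarrow> 'a set \<Rightarrow> 'a set \<Rightarrow> 'a set" where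
  "hunion H X Y = (if X \<union> Y \<in> H then X \<union> Y else X)"

definition continuation :: "'a set set \<Rightarrow> 'a set \<Rightarrow> 'a set set \<Rightarrow> 'a set set \<Rightarrow> 'a set set" where
  "continuation H Y K J = K \<union> {hunion H X Y | X. X \<in> J}"

definition hyp_partition :: "'a set set \<Rightarrow> 'a set set set \<Rightarrow> bool" where
  "hyp_partition H P \<longleftrightarrow> partition_on H P \<and> partition_on (\<Union>H) (Union ` P) \<and> inj_on Union P"

definition hconnected :: "'a set set \<Rightarrow> bool" where
  "hconnected H \<longleftrightarrow> (\<exists>!P. hyp_partition H P)"

text \<open>P is the finest hypergraph partition: the (unique) one whose blocks are connected.\<close>
definition finest_hyp_partition :: "'a set set \<Rightarrow> 'a set set set \<Rightarrow> bool" where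
  "finest_hyp_partition H P \<longleftrightarrow> hyp_partition H P \<and> (\<forall>B\<in>P. hconnected B)"

definition atomic :: "'a set set \<Rightarrow> bool" where
  "atomic H \<longleftrightarrow> (\<forall>x\<in>\<Union>H. {x} \<in> H)"

definition saturated :: "'a set set \<Rightarrow> bool" where
  "saturated H \<longleftrightarrow> (\<forall>X1\<in>H. \<forall>X2\<in>H. X1 \<inter> X2 \<noteq> {} \<longrightarrow> X1 \<union> X2 \<in> H)"

definition ASC :: "'a set set \<Rightarrow> bool" where
  "ASC H \<longleftrightarrow> hypergraph H \<and> atomic H \<and> saturated H \<and> hconnected H"

inductive construction :: "'a set set \<Rightarrow> 'a set set \<Rightarrow> bool" where
  empty: "construction {} {}"
| conn: "\<lbrakk> hypergraph H; atomic H; \<Union>H \<noteq> {}; hconnected H; x \<in> \<Union>H;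
           construction (restr H (\<Union>H - {x})) K \<rbrakk>
         \<Longrightarrow> construction H (insert (\<Union>H) K)"
| disconn: "\<lbrakk> hypergraph H; atomic H; \<not> hconnected H; finest_hyp_partition H P;
              card P \<ge> 2; \<forall>B\<in>P. construction B (f B) \<rbrakk>
         \<Longrightarrow> construction H (\<Union>B\<in>P. f B)"

end

theory Submission
  imports Defs
begin

lemma hpD:
  assumes "hyp_partition H P"
  shows "\<Union>P = H" "\<And>a b. a\<in>P \<Longrightarrow> b\<in>P \<Longrightarrow> a \<noteq> b \<Longrightarrow> a \<inter> b = {}" "{} \<notin> P"
     "\<Union>(Union ` P) = \<Union>H" "\<And>a b. a\<in>P \<Longrightarrow> b\<in>P \<Longrightarrow> a \<noteq> b \<Longrightarrow> \<Union>a \<inter> \<Union>b = {}"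
     "\<And>a. a \<in> P \<Longrightarrow> \<Union>a \<noteq> {}"
proof -
  have 1: "partition_on H P" and 2: "partition_on (\<Union>H) (Union ` P)" and 3: "inj_on Union P"
    using assms unfolding hyp_partition_def by auto
  show "\<Union>P = H" "{} \<notin> P" using 1 unfolding partition_on_def by auto
  show "\<And>a b. a\<in>P \<Longrightarrow> b\<in>P \<Longrightarrow> a \<noteq> b \<Longrightarrow> a \<inter> b = {}"
    using 1 unfolding partition_on_def disjoint_def by auto
  show "\<Union>(Union ` P) = \<Union>H" using 2 unfolding partition_on_def by auto
  show "\<And>a. a \<in> P \<Longrightarrow> \<Union>a \<noteq> {}"
  proof -
    fix a assume "a \<in> P"
    then have "\<Union>a \<in> Union ` P" by blast
    then show "\<Union>a \<noteq> {}" using 2 unfolding partition_on_def by metis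
  qed
  show "\<And>a b. a\<in>P \<Longrightarrow> b\<in>P \<Longrightarrow> a \<noteq> b \<Longrightarrow> \<Union>a \<inter> \<Union>b = {}"
  proof -
    fix a b assume ab: "a\<in>P" "b\<in>P" "a \<noteq> b"
    then have "\<Union>a \<noteq> \<Union>b" using 3 unfolding inj_on_def by blast
    moreover have "disjoint (Union ` P)" using 2 unfolding partition_on_def by auto
    ultimately show "\<Union>a \<inter> \<Union>b = {}" using ab unfolding disjoint_def by blast
  qed
qed

lemma hpI:
  assumes "\<Union>P = H" "\<And>a b. a\<in>P \<Longrightarrow> b\<in>P \<Longrightarrow> a \<noteq> b \<Longrightarrow> a \<inter> b = {}" "{} \<notin> P"
     "\<And>a b. a\<in>P \<Longrightarrow> b\<in>P \<Longrightarrow> a \<noteq> b \<Longrightarrow> \<Union>a \<inter> \<Union>b = {}"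
     "\<And>a. a \<in> P \<Longrightarrow> \<Union>a \<noteq> {}"
  shows "hyp_partition H P"
  unfolding hyp_partition_def
proof (intro conjI)
  show "partition_on H P" unfolding partition_on_def disjoint_def using assms(1-3) by simp
  show "inj_on Union P" unfolding inj_on_def
  proof (intro ballI impI)
    fix a b assume ab: "a \<in> P" "b \<in> P" "\<Union>a = \<Union>b"
    show "a = b"
    proof (rule ccontr)
      assume "a \<noteq> b"
      then have "\<Union>a \<inter> \<Union>b = {}" using assms(4) ab(1,2) by blast
      then show False using ab(3) assms(5)[OF ab(1)] by (metis Int_absorb)
    qed
  qed
  show "partition_on (\<Union>H) (Union ` P)" unfolding partition_on_def disjoint_def
  proof (intro conjI)
    show "\<Union>(Union ` P) = \<Union>H" using assms(1) by auto
    show "{} \<notin> Union ` P" using assms(5) by force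
    show "\<forall>a\<in>Union ` P. \<forall>b\<in>Union ` P. a \<noteq> b \<longrightarrow> a \<inter> b = {}"
    proof (intro ballI impI)
      fix a b assume "a \<in> Union ` P" "b \<in> Union ` P" "a \<noteq> b"
      then obtain A B where "A \<in> P" "B \<in> P" "a = \<Union>A" "b = \<Union>B" by blast
      then show "a \<inter> b = {}" using assms(4) \<open>a \<noteq> b\<close> by auto
    qed
  qed
qed

lemma hp_block_sub: "hyp_partition H P \<Longrightarrow> B \<in> P \<Longrightarrow> B \<subseteq> H"
  using hpD(1) by blast

lemma hp_block_ne: "hyp_partition H P \<Longrightarrow> B \<in> P \<Longrightarrow> B \<noteq> {}"
  using hpD(3) by blast

lemma hp_disj: "hyp_partition H P \<Longrightarrow> B1 \<in> P \<Longrightarrow> B2 \<in> P \<Longrightarrow> B1 \<noteq> B2 \<Longrightarrow> \<Union>B1 \<inter> \<Union>B2 = {}"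
  using hpD(5) by blast

lemma hp_cover: "hyp_partition H P \<Longrightarrow> X \<in> H \<Longrightarrow> \<exists>B\<in>P. X \<in> B"
  using hpD(1) by blast

lemma hp_mem: "hyp_partition H P \<Longrightarrow> X \<in> H \<Longrightarrow> B \<in> P \<Longrightarrow> X \<inter> \<Union>B \<noteq> {} \<Longrightarrow> X \<in> B"
proof -
  assume a: "hyp_partition H P" "X \<in> H" "B \<in> P" "X \<inter> \<Union>B \<noteq> {}"
  then obtain B' where "B' \<in> P" "X \<in> B'" using hp_cover by blast
  then show "X \<in> B" using hp_disj[OF a(1) \<open>B' \<in> P\<close> a(3)] a(4) by blast
qed

lemma hp_single: "{} \<notin> H \<Longrightarrow> H \<noteq> {} \<Longrightarrow> hyp_partition H {H}"
  by (rule hpI) auto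

lemma not_conn: "hyp_partition H P \<Longrightarrow> {} \<notin> H \<Longrightarrow> H \<noteq> {} \<Longrightarrow> P \<noteq> {H} \<Longrightarrow> \<not> hconnected H"
  unfolding hconnected_def using hp_single by metis

lemma conn_top: assumes "{} \<notin> G" "\<Union>G \<in> G" shows "hconnected G"
  unfolding hconnected_def
proof
  show "hyp_partition G {G}" using assms by (intro hp_single) auto
next
  fix P assume P: "hyp_partition G P"
  then obtain B where B: "B \<in> P" "\<Union>G \<in> B" using hp_cover assms by blast
  have eq: "B' = B" if "B' \<in> P" for B'
  proof -
    show "B' = B"
    proof (rule ccontr)
      assume "B' \<noteq> B"
      then have "\<Union>B' \<inter> \<Union>B = {}" using hp_disj P B \<open>B' \<in> P\<close> by blast
      moreover have "\<Union>B' \<subseteq> \<Union>G" using hp_block_sub[OF P \<open>B' \<in> P\<close>] by blast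
      moreover have "\<Union>G \<subseteq> \<Union>B" using B by blast
      moreover have "\<Union>B' \<noteq> {}" using hpD(6)[OF P \<open>B' \<in> P\<close>] .
      ultimately show False by blast
    qed
  qed
  have "P = {B}"
  proof (rule set_eqI)
    fix C show "C \<in> P \<longleftrightarrow> C \<in> {B}" by (metis eq B(1) singletonD singletonI)
  qed
  moreover have "\<Union>P = G" using hpD(1)[OF P] by auto
  ultimately show "P = {G}" by auto
qed

lemma top_in:
  assumes "hypergraph H" "saturated H" "hconnected H" "\<Union>H \<noteq> {}"
  shows "\<Union>H \<in> H"
proof -
  have fin: "finite H" and ne: "{} \<notin> H" using assms(1) unfolding hypergraph_def by auto
  have "H \<noteq> {}" using assms(4) by auto
  then obtain M where M: "M \<in> H" "\<forall>b\<in>H. M \<subseteq> b \<longrightarrow> M = b"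
    using finite_has_maximal[OF fin] by blast
  have disj: "X \<inter> M = {}" if "X \<in> H" "\<not> X \<subseteq> M" for X
  proof (rule ccontr)
    assume "X \<inter> M \<noteq> {}"
    then have "X \<union> M \<in> H" using assms(2) that(1) M(1) unfolding saturated_def by auto
    then have "M = X \<union> M" using M(2) by auto
    then show False using that(2) by auto
  qed
  define A where "A = {X\<in>H. X \<subseteq> M}"
  define B where "B = H - A"
  have "B = {}"
  proof (rule ccontr)
    assume Bne: "B \<noteq> {}"
    have "A \<noteq> {}" using M A_def by blast
    have UA: "\<Union>A = M" using M A_def by blast
    have UB: "\<Union>A \<inter> \<Union>B = {}"
    proof -
      have "X \<inter> M = {}" if "X \<in> B" for X using disj[of X] that unfolding B_def A_def by auto
      then show ?thesis unfolding UA by auto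
    qed
    have "\<Union>B \<noteq> {}"
    proof -
      obtain X where "X \<in> B" using Bne by blast
      moreover have "X \<noteq> {}" using calculation ne unfolding B_def by blast
      ultimately show ?thesis by blast
    qed
    have AB1: "A \<union> B = H" unfolding A_def B_def by blast
    have AB2: "A \<inter> B = {}" unfolding B_def by blast
    have UA': "\<Union>A \<noteq> {}" using UA M ne by auto
    have "hyp_partition H {A, B}"
    proof (rule hpI)
      show "\<Union>{A, B} = H" using AB1 by simp
      show "\<And>a b. a \<in> {A, B} \<Longrightarrow> b \<in> {A, B} \<Longrightarrow> a \<noteq> b \<Longrightarrow> a \<inter> b = {}"
        using AB2 by blast
      show "{} \<notin> {A, B}" using Bne \<open>A \<noteq> {}\<close> by simp
      show "\<And>a b. a \<in> {A, B} \<Longrightarrow> b \<in> {A, B} \<Longrightarrow> a \<noteq> b \<Longrightarrow> \<Union>a \<inter> \<Union>b = {}"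
        using UB by blast
      show "\<And>a. a \<in> {A, B} \<Longrightarrow> \<Union>a \<noteq> {}" using UA' \<open>\<Union>B \<noteq> {}\<close> by blast
    qed
    moreover have "{A,B} \<noteq> {H}"
    proof
      assume "{A,B} = {H}"
      then have "A = H" "B = H" by (metis doubleton_eq_iff insert_not_empty singleton_insert_inj_eq)+
      then show False using AB2 Bne by blast
    qed
    ultimately show False using not_conn assms(3) ne \<open>H \<noteq> {}\<close> by blast
  qed
  then have "\<forall>X\<in>H. X \<subseteq> M" unfolding B_def A_def by auto
  then have "\<Union>H = M" using M(1) by auto
  then show ?thesis using M by simp
qed


lemma cons_elems: "construction H K \<Longrightarrow> X \<in> K \<Longrightarrow> X \<noteq> {} \<and> X \<subseteq> \<Union>H"
proof (induction arbitrary: X rule: construction.induct)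
  case empty
  then show ?case by simp
next
  case (conn H x K)
  show ?case
  proof (cases "X = \<Union>H")
    case True
    then show ?thesis using conn.hyps(3) by simp
  next
    case False
    then have "X \<in> K" using conn.prems by simp
    then have "X \<noteq> {} \<and> X \<subseteq> \<Union>(restr H (\<Union>H - {x}))" using conn.IH by blast
    moreover have "\<Union>(restr H (\<Union>H - {x})) \<subseteq> \<Union>H" unfolding restr_def by blast
    ultimately show ?thesis by blast
  qed
next
  case (disconn H P f)
  then obtain B where B: "B \<in> P" "X \<in> f B" by blast
  have "hyp_partition H P" using disconn.hyps(4) unfolding finest_hyp_partition_def by simp
  then have "B \<subseteq> H" using hp_block_sub B(1) by blast
  moreover have "X \<noteq> {} \<and> X \<subseteq> \<Union>B" using disconn.IH B by blast
  ultimately show ?case by blast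
qed

lemma hg_restr: "hypergraph H \<Longrightarrow> hypergraph (restr H S)"
  unfolding hypergraph_def restr_def by auto

lemma at_restr: "atomic H \<Longrightarrow> atomic (restr H S)"
  unfolding atomic_def restr_def by auto

lemma sat_restr: "saturated H \<Longrightarrow> saturated (restr H S)"
  unfolding saturated_def restr_def by auto

lemma Union_restr: "atomic H \<Longrightarrow> \<Union>(restr H S) = S \<inter> \<Union>H"
  unfolding atomic_def restr_def by blast

lemma trace_img: "trace Z H = (\<lambda>X. X \<inter> Z) ` {X\<in>H. X \<inter> Z \<noteq> {}}"
  unfolding trace_def by auto

lemma hg_trace: "hypergraph H \<Longrightarrow> hypergraph (trace Z H)"
  unfolding hypergraph_def trace_img by auto

lemma at_trace: "atomic H \<Longrightarrow> atomic (trace Z H)"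
  unfolding atomic_def trace_def by fastforce

lemma Union_trace: "atomic H \<Longrightarrow> \<Union>(trace Z H) = Z \<inter> \<Union>H"
proof
  show "\<Union>(trace Z H) \<subseteq> Z \<inter> \<Union>H" unfolding trace_def by blast
  show "Z \<inter> \<Union>H \<subseteq> \<Union>(trace Z H)" if "atomic H"
  proof
    fix y assume "y \<in> Z \<inter> \<Union>H"
    then have "{y} \<in> H" "{y} \<inter> Z = {y}" using that unfolding atomic_def by auto
    then have "{y} \<in> trace Z H" unfolding trace_def by force
    then show "y \<in> \<Union>(trace Z H)" by blast
  qed
qed

lemma hg_block: "hyp_partition H P \<Longrightarrow> B \<in> P \<Longrightarrow> hypergraph H \<Longrightarrow> hypergraph B"
  using hp_block_sub unfolding hypergraph_def by (meson finite_subset subsetD)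

lemma at_block: "hyp_partition H P \<Longrightarrow> B \<in> P \<Longrightarrow> atomic H \<Longrightarrow> hypergraph H \<Longrightarrow> atomic B"
  unfolding atomic_def
proof
  fix y assume a: "hyp_partition H P" "B \<in> P" "\<forall>x\<in>\<Union>H. {x} \<in> H" "y \<in> \<Union>B"
  then have "{y} \<in> H" using hp_block_sub by blast
  then show "{y} \<in> B" using hp_mem[OF a(1) _ a(2)] a(4) by blast
qed

lemma sat_block: "hyp_partition H P \<Longrightarrow> B \<in> P \<Longrightarrow> saturated H \<Longrightarrow> saturated B"
  unfolding saturated_def
proof (intro ballI impI)
  fix X1 X2 assume a: "hyp_partition H P" "B \<in> P" "\<forall>X1\<in>H. \<forall>X2\<in>H. X1 \<inter> X2 \<noteq> {} \<longrightarrow> X1 \<union> X2 \<in> H"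
     "X1 \<in> B" "X2 \<in> B" "X1 \<inter> X2 \<noteq> {}"
  then have "X1 \<in> H" "X2 \<in> H" using hp_block_sub by blast+
  then have "X1 \<union> X2 \<in> H" using a(3,6) by blast
  moreover have "(X1 \<union> X2) \<inter> \<Union>B \<noteq> {}" using a(4,6) by blast
  ultimately show "X1 \<union> X2 \<in> B" using hp_mem[OF a(1) _ a(2)] by blast
qed

lemma LD:
  assumes hg: "hypergraph G" and at: "atomic G" and Qne: "Q \<noteq> {}" and QU: "\<Union>Q = G"
    and blk: "\<And>B. B \<in> Q \<Longrightarrow> B \<noteq> {} \<and> hconnected B \<and> construction B (g B)"
    and dj: "\<And>B1 B2. B1 \<in> Q \<Longrightarrow> B2 \<in> Q \<Longrightarrow> B1 \<noteq> B2 \<Longrightarrow> \<Union>B1 \<inter> \<Union>B2 = {}"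
  shows "construction G (\<Union>B\<in>Q. g B)"
proof -
  have ne: "{} \<notin> G" and fin: "finite G" using hg unfolding hypergraph_def by auto
  have UBne: "\<Union>B \<noteq> {}" if BQ: "B \<in> Q" for B
  proof -
    obtain X where X: "X \<in> B" using blk[OF BQ] by blast
    have "X \<in> G" using X BQ QU by auto
    then have "X \<noteq> {}" using ne by auto
    then show ?thesis using X by blast
  qed
  have hp: "hyp_partition G Q"
  proof (rule hpI)
    show "\<Union>Q = G" by (rule QU)
    show "a \<inter> b = {}" if ab: "a \<in> Q" "b \<in> Q" "a \<noteq> b" for a b
    proof (rule ccontr)
      assume "a \<inter> b \<noteq> {}"
      then obtain Y where Y: "Y \<in> a" "Y \<in> b" by blast
      then have "Y \<subseteq> \<Union>a \<inter> \<Union>b" by blast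
      then have "Y = {}" using dj[OF ab] by blast
      moreover have "Y \<in> G" using Y ab QU by auto
      ultimately show False using ne by auto
    qed
    show "{} \<notin> Q" using blk by auto
    show "\<Union>a \<inter> \<Union>b = {}" if "a \<in> Q" "b \<in> Q" "a \<noteq> b" for a b using dj[OF that] .
    show "\<Union>a \<noteq> {}" if "a \<in> Q" for a using UBne[OF that] .
  qed
  have finQ: "finite Q" using QU fin by (metis finite_UnionD)
  show ?thesis
  proof (cases "card Q \<ge> 2")
    case True
    have "Q \<noteq> {G}" using True by auto
    moreover have "G \<noteq> {}" using Qne QU blk by auto
    ultimately have nc: "\<not> hconnected G" using not_conn[OF hp ne] by auto
    have "finest_hyp_partition G Q" unfolding finest_hyp_partition_def using hp blk by auto
    moreover have "\<forall>B\<in>Q. construction B (g B)" using blk by auto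
    ultimately show ?thesis using construction.disconn[OF hg at nc _ True, of g] by auto
  next
    case False
    moreover have "card Q > 0" using Qne finQ by (simp add: card_gt_0_iff)
    ultimately have "card Q = 1" by linarith
    then obtain B where "Q = {B}" using card_1_singletonE by blast
    moreover have "G = B" using calculation QU by simp
    ultimately show ?thesis using blk by simp
  qed
qed


lemma hunion_restr: "X \<union> Y \<subseteq> S \<Longrightarrow> hunion (restr H S) X Y = hunion H X Y"
  unfolding hunion_def restr_def by auto

lemma restr_trace_eq:
  assumes "x \<in> Z" "Z \<subseteq> \<Union>H"
  shows "restr (trace Z H) (Z - {x}) = trace (Z - {x}) (restr H (\<Union>H - {x}))"
proof
  show "restr (trace Z H) (Z - {x}) \<subseteq> trace (Z - {x}) (restr H (\<Union>H - {x}))"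
  proof
    fix W assume "W \<in> restr (trace Z H) (Z - {x})"
    then obtain X where X: "X \<in> H" "W = X \<inter> Z" "X \<inter> Z \<noteq> {}" "X \<inter> Z \<subseteq> Z - {x}"
      unfolding restr_def trace_def by blast
    then have "x \<notin> X" using assms(1) by blast
    then have "X \<in> restr H (\<Union>H - {x})" using X(1) unfolding restr_def by blast
    moreover have e: "W = X \<inter> (Z - {x})" using X(2) \<open>x \<notin> X\<close> by blast
    moreover have "X \<inter> (Z - {x}) \<noteq> {}" using X(3) X(2) e by simp
    ultimately show "W \<in> trace (Z - {x}) (restr H (\<Union>H - {x}))"
      unfolding trace_def by blast
  qed
  show "trace (Z - {x}) (restr H (\<Union>H - {x})) \<subseteq> restr (trace Z H) (Z - {x})"
  proof
    fix W assume "W \<in> trace (Z - {x}) (restr H (\<Union>H - {x}))"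
    then obtain X where X: "X \<in> H" "X \<subseteq> \<Union>H - {x}" "W = X \<inter> (Z - {x})" "X \<inter> (Z - {x}) \<noteq> {}"
      unfolding restr_def trace_def by blast
    then have "W = X \<inter> Z" by blast
    moreover have "X \<inter> Z \<noteq> {}" using X(4) by blast
    ultimately have "W \<in> trace Z H" using X(1) unfolding trace_def by blast
    moreover have "W \<subseteq> Z - {x}" using X(3) by blast
    ultimately show "W \<in> restr (trace Z H) (Z - {x})" unfolding restr_def by blast
  qed
qed

lemma trace_Un: "trace Z (A \<union> B) = trace Z A \<union> trace Z B"
  unfolding trace_def by blast

lemma trace_cong: "(\<And>W. W \<in> A \<Longrightarrow> W \<inter> Z = W \<inter> Z') \<Longrightarrow> trace Z A = trace Z' A"
  unfolding trace_def by (metis (no_types, lifting))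

lemma trace_id: "(\<And>W. W \<in> A \<Longrightarrow> W \<noteq> {} \<and> W \<subseteq> Z) \<Longrightarrow> trace Z A = A"
proof -
  assume a: "\<And>W. W \<in> A \<Longrightarrow> W \<noteq> {} \<and> W \<subseteq> Z"
  have "trace Z A = {W \<inter> Z | W. W \<in> A \<and> W \<inter> Z \<noteq> {}}" unfolding trace_def ..
  also have "\<dots> = {W | W. W \<in> A}"
  proof -
    have "W \<inter> Z = W \<and> W \<inter> Z \<noteq> {}" if "W \<in> A" for W using a[OF that] by blast
    then show ?thesis by (metis (no_types, lifting))
  qed
  finally show ?thesis by simp
qed

lemma trace_empty: "trace {} A = {}"
  unfolding trace_def by simp

lemma main:
  "construction H L \<Longrightarrow> saturated H \<Longrightarrow> Y \<in> L \<Longrightarrow>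
   construction (restr H Y) (restr L Y) \<and> construction (trace (\<Union>H - Y) H) (trace (\<Union>H - Y) L)
   \<and> continuation H Y (restr L Y) (trace (\<Union>H - Y) L) = L"
proof (induction arbitrary: Y rule: construction.induct)
  case empty
  then show ?case by simp
next
  case (conn H x K)
  define C where "C = \<Union>H"
  define H' where "H' = restr H (C - {x})"
  have UH': "\<Union>H' = C - {x}" unfolding H'_def C_def using Union_restr[OF conn.hyps(2)] by blast
  have CH: "C \<in> H" unfolding C_def using top_in conn.hyps(1,3,4) conn.prems(1) by blast
  have Kel: "W \<noteq> {} \<and> W \<subseteq> C - {x}" if "W \<in> K" for W
    using cons_elems[OF conn.hyps(6) that] UH' unfolding H'_def C_def by simp
  have L: "insert (\<Union>H) K = insert C K" unfolding C_def ..
  show ?case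
  proof (cases "Y = C")
    case True
    have r1: "restr H Y = H" unfolding True C_def restr_def by blast
    have r2: "restr (insert (\<Union>H) K) Y = insert (\<Union>H) K" unfolding True L restr_def using Kel by blast
    have t1: "\<Union>H - Y = {}" unfolding True C_def by simp
    have t2: "trace {} A = {}" for A :: "'a set set" unfolding trace_def by simp
    have "construction H (insert (\<Union>H) K)" using construction.conn[OF conn.hyps] .
    then show ?thesis unfolding r1 r2 t1 t2 continuation_def using construction.empty by simp
  next
    case False
    then have YK: "Y \<in> K" using conn.prems(2) unfolding C_def by simp
    have sat': "saturated (restr H (\<Union>H - {x}))" using sat_restr conn.prems(1) by blast
    define Z where "Z = C - Y"
    define Z' where "Z' = Z - {x}"
    have Z'eq: "\<Union>(restr H (\<Union>H - {x})) - Y = Z'" using UH' unfolding Z'_def Z_def H'_def C_def by blast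
    have IH: "construction (restr H' Y) (restr K Y)" "construction (trace Z' H') (trace Z' K)"
       "continuation H' Y (restr K Y) (trace Z' K) = K"
      using conn.IH[OF sat' YK] unfolding Z'eq H'_def C_def by auto
    have Ysub: "Y \<noteq> {}" "Y \<subseteq> C - {x}" using Kel YK by auto
    have xZ: "x \<in> Z" unfolding Z_def C_def using conn.hyps(5) Ysub by blast
    have ZC: "Z \<subseteq> C" unfolding Z_def by blast
    have ra1: "restr H Y = restr H' Y" unfolding H'_def restr_def using Ysub by blast
    have ra2: "restr (insert C K) Y = restr K Y"
      unfolding restr_def using conn.hyps(5) Ysub unfolding C_def by auto
    have tb1: "trace Z (insert C K) = insert Z (trace Z' K)"
    proof -
      have "trace Z (insert C K) = insert (C \<inter> Z) (trace Z K)"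
        unfolding trace_def using xZ ZC by blast
      moreover have "C \<inter> Z = Z" using ZC by blast
      moreover have "trace Z K = trace Z' K"
      proof -
        have "W \<inter> Z = W \<inter> Z'" if "W \<in> K" for W using Kel[OF that] unfolding Z'_def by blast
        then show ?thesis unfolding trace_def by (metis (no_types, lifting))
      qed
      ultimately show ?thesis by simp
    qed
    have UT: "\<Union>(trace Z H) = Z" using Union_trace[OF conn.hyps(2), of Z] ZC unfolding C_def by blast
    have ZT: "Z \<in> trace Z H" unfolding trace_def using CH ZC xZ by blast
    have hgT: "hypergraph (trace Z H)" using hg_trace conn.hyps(1) by blast
    have "construction (trace Z H) (insert (\<Union>(trace Z H)) (trace Z' K))"
    proof (rule construction.conn)
      show "hypergraph (trace Z H)" by (rule hgT)
      show "atomic (trace Z H)" using at_trace conn.hyps(2) by blast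
      show "\<Union>(trace Z H) \<noteq> {}" using UT xZ by blast
      show "hconnected (trace Z H)" using conn_top[of "trace Z H"] hgT UT ZT unfolding hypergraph_def by simp
      show "x \<in> \<Union>(trace Z H)" using UT xZ by simp
      have "restr (trace Z H) (\<Union>(trace Z H) - {x}) = trace Z' H'"
        unfolding UT Z'_def H'_def C_def using restr_trace_eq[of x Z H] xZ ZC unfolding C_def by blast
      then show "construction (restr (trace Z H) (\<Union>(trace Z H) - {x})) (trace Z' K)" using IH(2) by simp
    qed
    then have b: "construction (trace Z H) (trace Z (insert C K))" unfolding tb1 UT .
    have ZY: "Z \<union> Y = C" using Ysub unfolding Z_def by blast
    have hc1: "hunion H Z Y = C" unfolding hunion_def using CH ZY by simp
    have hc2: "hunion H X Y = hunion H' X Y" if "X \<in> trace Z' K" for X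
    proof -
      have "X \<subseteq> Z'" using that unfolding trace_def by blast
      then have "X \<union> Y \<subseteq> C - {x}" using Ysub unfolding Z'_def Z_def by blast
      then show ?thesis unfolding H'_def using hunion_restr by metis
    qed
    have c: "continuation H Y (restr K Y) (trace Z (insert C K)) = insert C K"
    proof -
      have "continuation H Y (restr K Y) (trace Z (insert C K))
          = insert (hunion H Z Y) (restr K Y \<union> {hunion H X Y |X. X \<in> trace Z' K})"
        unfolding continuation_def tb1 by blast
      also have "{hunion H X Y |X. X \<in> trace Z' K} = {hunion H' X Y |X. X \<in> trace Z' K}"
        using hc2 by metis
      finally show ?thesis using IH(3) hc1 unfolding continuation_def by simp
    qed
    have ZZ: "\<Union>H - Y = Z" unfolding Z_def C_def ..
    show ?thesis unfolding L ZZ ra1 ra2 using IH(1) b c by simp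
  qed
next
  case (disconn H P f)
  have hp: "hyp_partition H P" using disconn.hyps(4) unfolding finest_hyp_partition_def by simp
  obtain B0 where B0: "B0 \<in> P" "Y \<in> f B0" using disconn.prems(2) by blast
  have satB0: "saturated B0" using sat_block[OF hp B0(1) disconn.prems(1)] .
  have conB: "construction B (f B)" if "B \<in> P" for B using disconn.IH that by blast
  define Z0 where "Z0 = \<Union>B0 - Y"
  define Z where "Z = \<Union>H - Y"
  define R where "R = (\<Union>B\<in>P-{B0}. f B)"
  have IH: "construction (restr B0 Y) (restr (f B0) Y)" "construction (trace Z0 B0) (trace Z0 (f B0))"
    "continuation B0 Y (restr (f B0) Y) (trace Z0 (f B0)) = f B0"
    using disconn.IH B0 satB0 unfolding Z0_def by blast+
  have Ysub: "Y \<noteq> {}" "Y \<subseteq> \<Union>B0" using cons_elems[OF conB[OF B0(1)] B0(2)] by auto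
  have B0sub: "B0 \<subseteq> H" using hp_block_sub[OF hp B0(1)] .
  have UB0sub: "\<Union>B0 \<subseteq> \<Union>H" using B0sub by blast
  have neH: "{} \<notin> H" using disconn.hyps(1) unfolding hypergraph_def by simp
  have dB: "\<Union>B \<inter> \<Union>B0 = {}" if "B \<in> P" "B \<noteq> B0" for B using hp_disj[OF hp that(1) B0(1) that(2)] .
  have other: "W \<noteq> {} \<and> W \<subseteq> \<Union>B \<and> W \<inter> \<Union>B0 = {}" if "B \<in> P" "B \<noteq> B0" "W \<in> f B" for B W
    using cons_elems[OF conB[OF that(1)] that(3)] dB[OF that(1,2)] by blast
  have Rel: "W \<noteq> {} \<and> W \<subseteq> Z \<and> W \<inter> \<Union>B0 = {}" if WR: "W \<in> R" for W
  proof -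
    obtain B where B: "B \<in> P" "B \<noteq> B0" "W \<in> f B" using WR unfolding R_def by blast
    have "\<Union>B \<subseteq> \<Union>H" using hp_block_sub[OF hp B(1)] by blast
    then show ?thesis using other[OF B] Ysub unfolding Z_def by blast
  qed
  have Lsplit: "(\<Union>B\<in>P. f B) = f B0 \<union> R" unfolding R_def using B0(1) by blast
  have ra1: "restr H Y = restr B0 Y"
  proof
    show "restr B0 Y \<subseteq> restr H Y" using B0sub unfolding restr_def by blast
    show "restr H Y \<subseteq> restr B0 Y"
    proof
      fix X assume "X \<in> restr H Y"
      then have X: "X \<in> H" "X \<subseteq> Y" unfolding restr_def by auto
      then have "X \<noteq> {}" using neH by auto
      then have "X \<inter> \<Union>B0 \<noteq> {}" using X(2) Ysub(2) by blast
      then have "X \<in> B0" using hp_mem[OF hp X(1) B0(1)] by simp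
      then show "X \<in> restr B0 Y" using X(2) unfolding restr_def by simp
    qed
  qed
  have ra2: "restr (\<Union>B\<in>P. f B) Y = restr (f B0) Y"
  proof -
    have "\<not> W \<subseteq> Y" if "W \<in> R" for W using Rel[OF that] Ysub(2) by blast
    then show ?thesis unfolding Lsplit restr_def by blast
  qed
  have tL: "trace Z (\<Union>B\<in>P. f B) = trace Z0 (f B0) \<union> R"
  proof -
    have "trace Z (f B0) = trace Z0 (f B0)"
    proof (rule trace_cong)
      fix W assume "W \<in> f B0"
      then have "W \<subseteq> \<Union>B0" using cons_elems[OF conB[OF B0(1)]] by blast
      then show "W \<inter> Z = W \<inter> Z0" unfolding Z_def Z0_def using UB0sub by blast
    qed
    moreover have "trace Z R = R" using Rel by (intro trace_id) blast
    ultimately show ?thesis unfolding Lsplit trace_Un by simp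
  qed
  define Q0 where "Q0 = P - {B0}"
  have Q0ne: "Q0 \<noteq> {}"
  proof
    assume "Q0 = {}"
    then have "P \<subseteq> {B0}" unfolding Q0_def by blast
    then have "card P \<le> card {B0}" by (intro card_mono) simp_all
    then have "card P \<le> 1" by simp
    then show False using disconn.hyps(5) by simp
  qed
  have Q0el: "B \<noteq> {} \<and> hconnected B \<and> construction B (f B)" if "B \<in> Q0" for B
    using that hp_block_ne[OF hp] conB disconn.hyps(4) unfolding Q0_def finest_hyp_partition_def by blast
  have Q0dj: "\<Union>B1 \<inter> \<Union>B2 = {}" if "B1 \<in> Q0" "B2 \<in> Q0" "B1 \<noteq> B2" for B1 B2
    using hp_disj[OF hp] that unfolding Q0_def by blast
  have tH: "trace Z H = trace Z0 B0 \<union> \<Union>Q0"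
  proof -
    have Hs: "H = B0 \<union> \<Union>Q0" using hpD(1)[OF hp] B0(1) unfolding Q0_def by blast
    have "trace Z B0 = trace Z0 B0"
    proof (rule trace_cong)
      fix W assume "W \<in> B0"
      then have "W \<subseteq> \<Union>B0" by blast
      then show "W \<inter> Z = W \<inter> Z0" unfolding Z_def Z0_def using UB0sub by blast
    qed
    moreover have "trace Z (\<Union>Q0) = \<Union>Q0"
    proof (rule trace_id)
      fix W assume "W \<in> \<Union>Q0"
      then obtain B where B: "B \<in> P" "B \<noteq> B0" "W \<in> B" unfolding Q0_def by blast
      have "W \<in> H" using hp_block_sub[OF hp B(1)] B(3) by blast
      then have "W \<noteq> {}" "W \<subseteq> \<Union>H" using neH by auto
      moreover have "W \<subseteq> \<Union>B" using B(3) by blast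
      ultimately show "W \<noteq> {} \<and> W \<subseteq> Z" using dB[OF B(1,2)] Ysub unfolding Z_def by blast
    qed
    ultimately show ?thesis by (subst Hs) (simp add: trace_Un)
  qed
  have hgT: "hypergraph (trace Z H)" using hg_trace disconn.hyps(1) by blast
  have atT: "atomic (trace Z H)" using at_trace disconn.hyps(2) by blast
  have b: "construction (trace Z H) (trace Z0 (f B0) \<union> R)"
  proof (cases "Z0 = {}")
    case True
    have "construction (trace Z H) (\<Union>B\<in>Q0. f B)"
      using LD[OF hgT atT Q0ne _ Q0el Q0dj] tH unfolding True trace_empty by simp
    then show ?thesis unfolding True trace_empty R_def Q0_def by simp
  next
    case False
    define T0 where "T0 = trace Z0 B0"
    define g where "g = f(T0 := trace Z0 (f B0))"
    have hgB0: "hypergraph B0" using hg_block[OF hp B0(1) disconn.hyps(1)] .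
    have atB0: "atomic B0" using at_block[OF hp B0(1) disconn.hyps(2,1)] .
    have cB0: "hconnected B0" using disconn.hyps(4) B0(1) unfolding finest_hyp_partition_def by blast
    have topB0: "\<Union>B0 \<in> B0" using top_in[OF hgB0 satB0 cB0 hpD(6)[OF hp B0(1)]] .
    have UT0: "\<Union>T0 = Z0" unfolding T0_def using Union_trace[OF atB0, of Z0] unfolding Z0_def by blast
    have Z0T0: "Z0 \<in> T0" unfolding T0_def trace_def using topB0 False unfolding Z0_def by blast
    have neT0: "{} \<notin> T0" using hg_trace[OF hgB0, of Z0] unfolding T0_def hypergraph_def by simp
    have cT0: "hconnected T0" using conn_top[OF neT0] UT0 Z0T0 by simp
    have T0notin: "T0 \<notin> Q0"
    proof
      assume "T0 \<in> Q0"
      then have "\<Union>T0 \<inter> \<Union>B0 = {}" using dB unfolding Q0_def by blast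
      then show False using UT0 False unfolding Z0_def by blast
    qed
    have gQ0: "g B = f B" if "B \<in> Q0" for B using that T0notin unfolding g_def by auto
    have "construction (trace Z H) (\<Union>B\<in>insert T0 Q0. g B)"
    proof (rule LD[OF hgT atT])
      show "insert T0 Q0 \<noteq> {}" by simp
      show "\<Union>(insert T0 Q0) = trace Z H" using tH unfolding T0_def by simp
      show "B \<noteq> {} \<and> hconnected B \<and> construction B (g B)" if "B \<in> insert T0 Q0" for B
      proof (cases "B = T0")
        case True
        then show ?thesis using Z0T0 cT0 IH(2) unfolding g_def T0_def by auto
      next
        case False
        then show ?thesis using that Q0el gQ0 by auto
      qed
      show "\<Union>B1 \<inter> \<Union>B2 = {}" if "B1 \<in> insert T0 Q0" "B2 \<in> insert T0 Q0" "B1 \<noteq> B2" for B1 B2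
      proof -
        have d0: "\<Union>T0 \<inter> \<Union>B = {}" if "B \<in> Q0" for B
          using dB[of B] that UT0 unfolding Q0_def Z0_def by blast
        show ?thesis using that d0 Q0dj by blast
      qed
    qed
    moreover have "(\<Union>B\<in>insert T0 Q0. g B) = trace Z0 (f B0) \<union> R"
    proof -
      have "(\<Union>B\<in>insert T0 Q0. g B) = g T0 \<union> (\<Union>B\<in>Q0. g B)" by simp
      moreover have "(\<Union>B\<in>Q0. g B) = (\<Union>B\<in>Q0. f B)" using gQ0 by simp
      moreover have "g T0 = trace Z0 (f B0)" unfolding g_def by simp
      ultimately show ?thesis unfolding R_def Q0_def by simp
    qed
    ultimately show ?thesis by simp
  qed
  have hc1: "hunion H X Y = hunion B0 X Y" if "X \<in> trace Z0 (f B0)" for X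
  proof -
    have "X \<subseteq> Z0" using that unfolding trace_def by blast
    then have sub: "X \<union> Y \<subseteq> \<Union>B0" unfolding Z0_def using Ysub by blast
    have "X \<union> Y \<in> H \<longleftrightarrow> X \<union> Y \<in> B0"
    proof
      assume "X \<union> Y \<in> H"
      moreover have "(X \<union> Y) \<inter> \<Union>B0 \<noteq> {}" using sub Ysub(1) by blast
      ultimately show "X \<union> Y \<in> B0" using hp_mem[OF hp _ B0(1)] by blast
    qed (use B0sub in blast)
    then show ?thesis unfolding hunion_def by simp
  qed
  have hc2: "hunion H W Y = W" if WR: "W \<in> R" for W
  proof -
    obtain B where B: "B \<in> P" "B \<noteq> B0" "W \<in> f B" using WR unfolding R_def by blast
    have "W \<union> Y \<notin> H"
    proof
      assume a: "W \<union> Y \<in> H"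
      have "(W \<union> Y) \<inter> \<Union>B \<noteq> {}" using other[OF B] by blast
      then have "W \<union> Y \<in> B" using hp_mem[OF hp a B(1)] by blast
      then have "Y \<subseteq> \<Union>B" by blast
      then show False using dB[OF B(1,2)] Ysub by blast
    qed
    then show ?thesis unfolding hunion_def by simp
  qed
  have c: "continuation H Y (restr (f B0) Y) (trace Z0 (f B0) \<union> R) = f B0 \<union> R"
  proof -
    have "continuation H Y (restr (f B0) Y) (trace Z0 (f B0) \<union> R)
        = (restr (f B0) Y \<union> {hunion H X Y |X. X \<in> trace Z0 (f B0)}) \<union> {hunion H X Y |X. X \<in> R}"
      unfolding continuation_def by blast
    also have "{hunion H X Y |X. X \<in> trace Z0 (f B0)} = {hunion B0 X Y |X. X \<in> trace Z0 (f B0)}"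
      unfolding Setcompr_eq_image by (rule image_cong[OF refl hc1])
    also have "{hunion H X Y |X. X \<in> R} = R"
    proof -
      have "(\<lambda>X. hunion H X Y) ` R = (\<lambda>X. X) ` R" by (rule image_cong[OF refl hc2])
      then show ?thesis unfolding Setcompr_eq_image by simp
    qed
    finally show ?thesis using IH(3) unfolding continuation_def by simp
  qed
  show ?case unfolding Z_def[symmetric] tL ra1 ra2 Lsplit[symmetric]
    using IH(1) b c Lsplit by simp
qed


theorem proposition7p8:
  fixes H L :: "'a set set" and Y Z :: "'a set"
  assumes "ASC H"
    and "construction H L"
    and "Y \<in> L"
    and "Z = \<Union>H - Y"
  shows "construction (restr H Y) (restr L Y)
       \<and> construction (trace Z H) (trace Z L)
       \<and> continuation H Y (restr L Y) (trace Z L) = L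
       \<and> (\<forall>K J. construction (restr H Y) K \<and> construction (trace Z H) J
                 \<and> continuation H Y K J = L \<longrightarrow> K = restr L Y \<and> J = trace Z L)"
proof -
  have sat: "saturated H" using assms(1) unfolding ASC_def by simp
  have M: "construction (restr H Y) (restr L Y) \<and> construction (trace Z H) (trace Z L)
       \<and> continuation H Y (restr L Y) (trace Z L) = L"
    using main[OF assms(2) sat assms(3)] unfolding assms(4) .
  have U: "K = restr L Y \<and> J = trace Z L"
    if K: "construction (restr H Y) K" and J: "construction (trace Z H) J"
      and E: "continuation H Y K J = L" for K J
  proof -
    have Kel: "W \<noteq> {} \<and> W \<subseteq> Y" if "W \<in> K" for W
      using cons_elems[OF K that] unfolding restr_def by blast
    have Jel: "X \<noteq> {} \<and> X \<subseteq> Z" if "X \<in> J" for X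
      using cons_elems[OF J that] unfolding trace_def by blast
    have YZ: "Y \<inter> Z = {}" unfolding assms(4) by blast
    have hJ: "hunion H X Y \<inter> Z = X \<and> \<not> hunion H X Y \<subseteq> Y" if "X \<in> J" for X
      using Jel[OF that] YZ unfolding hunion_def by auto
    have L: "L = K \<union> (\<lambda>X. hunion H X Y) ` J"
      using E unfolding continuation_def Setcompr_eq_image by simp
    have "restr L Y = K"
    proof
      show "restr L Y \<subseteq> K" unfolding L restr_def using hJ by auto
      show "K \<subseteq> restr L Y" unfolding L restr_def using Kel by auto
    qed
    moreover have "trace Z L = J"
    proof
      show "trace Z L \<subseteq> J"
      proof
        fix V assume "V \<in> trace Z L"
        then obtain W where W: "W \<in> L" "V = W \<inter> Z" "W \<inter> Z \<noteq> {}" unfolding trace_def by blast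
        show "V \<in> J"
        proof (cases "W \<in> K")
          case True
          then show ?thesis using Kel[OF True] W(3) YZ by blast
        next
          case False
          then obtain X where "X \<in> J" "W = hunion H X Y" using W(1) unfolding L by blast
          then show ?thesis using hJ W(2) by simp
        qed
      qed
      show "J \<subseteq> trace Z L"
      proof
        fix X assume X: "X \<in> J"
        then have "hunion H X Y \<in> L" unfolding L by blast
        moreover have "hunion H X Y \<inter> Z = X" "X \<noteq> {}" using hJ[OF X] Jel[OF X] by auto
        ultimately have "hunion H X Y \<in> {W \<in> L. W \<inter> Z \<noteq> {}}" "X = hunion H X Y \<inter> Z" by auto
        then show "X \<in> trace Z L" unfolding trace_img by (rule rev_image_eqI)
      qed
    qed
    ultimately show ?thesis by simp
  qed
  show ?thesis using M U by blast
qed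

end
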